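(* Let $(E,\mathscr{T},\le)$ be a $T_2$-preordered Tychonoff space such that the quotient $(E/\!\sim,\mathscr{T}/\!\sim,\lesssim)$ is a completely regularly ordered space. Then the preorder $\le$ is represented by the continuous isotone functions on $E$, i.e. $G(\le)=\bigcap_{f\in\mathcal{F}}G_f$ with $\mathcal{F}$ the family of continuous isotone $f:E\to[0,1]$. Let $\beta:E\to(\beta E,\mathscr{T}_\beta,\le_\beta)$ be the Stone–Čech compactification with the preorder $G(\le_\beta)=\bigcap_{f\in\mathcal{F}}G_{\tilde f}$, $\tilde f$ the unique continuous extension of $f\circ\beta^{-1}$ to $\beta E$; let $\sim_\beta$ be the equivalence ($x\le_\beta y$ and $y\le_\beta x$) and $\Pi:\beta E\to\beta E/\!\sim_\beta$ the quotient projection onto the $T_2$-ordered space $(\beta E/\!\sim_\beta,\mathscr{T}_\beta/\!\sim_\beta,\lesssim_\beta)$, and $\pi:E\to E/\!\sim$ the quotient projection. Then $\varphi:=\Pi\circ\beta\circ\pi^{-1}:E/\!\sim\,\to\beta E/\!\sim_\beta$ is a well-defined map, it is a $T_2$-order compactification of $E/\!\sim$ equivalent to the Nachbin $T_2$-order compactification $n:E/\!\sim\,\to n(E/\!\sim)$, and $\varphi\circ\pi=\Pi\circ\beta$.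
   Context: A topological preordered space $(E,\mathscr{T},\le)$ is $T_2$-preordered if $G(\le)=\{(x,y):x\le y\}$ is closed in $E\times E$; $T_2$-ordered if moreover $\le$ is antisymmetric. Isotone: $x\le y\Rightarrow f(x)\le f(y)$; $G_f=\{(x,y):f(x)\le f(y)\}$. For a preorder $\le$, $x\sim y$ means $x\le y$ and $y\le x$; $E/\!\sim$ carries the quotient topology and the order $[x]\lesssim[y]$ iff $x\le y$. A topological ordered space is completely regularly ordered if its topology is the initial topology of its continuous isotone functions into $[0,1]$ and $x\le y$ iff $f(x)\le f(y)$ for all such $f$. A preorder embedding is a continuous isotone injective map which is a homeomorphism onto its image with isotone inverse (image with induced preorder); a ($T_2$-order) compactification of an ordered space $X$ is a preorder embedding with dense image into a compact Hausdorff $T_2$-ordered space. $c_1\le c_2$ means there is a continuous isotone $C:c_2X\to c_1X$ with $C\circ c_2=c_1$; equivalent means both $c_1\le c_2$ and $c_2\le c_1$. The Nachbin $T_2$-order compactification of a completely regularly ordered space $X$ is the (unique up to equivalence) $T_2$-order compactification $n:X\to nX$ such that every continuous isotone function $X\to[0,1]$ extends to a continuous isotone function on $nX$. *)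

theory Defs
  imports "HOL-Analysis.Analysis"
begin

text \<open>A topological preordered space is a pair of a topology X and a relation le,
  only its restriction to topspace X matters.\<close>

definition preorder_on :: "'a set \<Rightarrow> ('a \<Rightarrow> 'a \<Rightarrow> bool) \<Rightarrow> bool" where
  "preorder_on S le \<longleftrightarrow> (\<forall>x\<in>S. le x x) \<and>
     (\<forall>x\<in>S. \<forall>y\<in>S. \<forall>z\<in>S. le x y \<longrightarrow> le y z \<longrightarrow> le x z)"

definition partial_order_on :: "'a set \<Rightarrow> ('a \<Rightarrow> 'a \<Rightarrow> bool) \<Rightarrow> bool" where
  "partial_order_on S le \<longleftrightarrow> preorder_on S le \<and>
     (\<forall>x\<in>S. \<forall>y\<in>S. le x y \<longrightarrow> le y x \<longrightarrow> x = y)"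

definition graph_rel :: "'a topology \<Rightarrow> ('a \<Rightarrow> 'a \<Rightarrow> bool) \<Rightarrow> ('a \<times> 'a) set" where
  "graph_rel X le = {(x,y). x \<in> topspace X \<and> y \<in> topspace X \<and> le x y}"

definition T2_preordered :: "'a topology \<Rightarrow> ('a \<Rightarrow> 'a \<Rightarrow> bool) \<Rightarrow> bool" where
  "T2_preordered X le \<longleftrightarrow> preorder_on (topspace X) le \<and>
     closedin (prod_topology X X) (graph_rel X le)"

definition T2_ordered :: "'a topology \<Rightarrow> ('a \<Rightarrow> 'a \<Rightarrow> bool) \<Rightarrow> bool" where
  "T2_ordered X le \<longleftrightarrow> T2_preordered X le \<and> partial_order_on (topspace X) le"

definition Tychonoff_space :: "'a topology \<Rightarrow> bool" where
  "Tychonoff_space X \<longleftrightarrow> completely_regular_space X \<and> Hausdorff_space X"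

definition isotone :: "'a topology \<Rightarrow> ('a \<Rightarrow> 'a \<Rightarrow> bool) \<Rightarrow> ('b \<Rightarrow> 'b \<Rightarrow> bool) \<Rightarrow> ('a \<Rightarrow> 'b) \<Rightarrow> bool" where
  "isotone X le le' f \<longleftrightarrow> (\<forall>x\<in>topspace X. \<forall>y\<in>topspace X. le x y \<longrightarrow> le' (f x) (f y))"

abbreviation unit_interval :: "real topology" where
  "unit_interval \<equiv> top_of_set {0..1}"

definition cont_iso :: "'a topology \<Rightarrow> ('a \<Rightarrow> 'a \<Rightarrow> bool) \<Rightarrow> ('a \<Rightarrow> real) set" where
  "cont_iso X le = {f. continuous_map X unit_interval f \<and> isotone X le (\<le>) f}"

definition completely_regularly_ordered :: "'a topology \<Rightarrow> ('a \<Rightarrow> 'a \<Rightarrow> bool) \<Rightarrow> bool" where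
  "completely_regularly_ordered X le \<longleftrightarrow>
     partial_order_on (topspace X) le \<and>
     X = topology_generated_by
           {{x \<in> topspace X. f x \<in> U} | f U. f \<in> cont_iso X le \<and> openin unit_interval U} \<and>
     (\<forall>x\<in>topspace X. \<forall>y\<in>topspace X. le x y \<longleftrightarrow> (\<forall>f\<in>cont_iso X le. f x \<le> f y))"

definition equiv_of :: "('a \<Rightarrow> 'a \<Rightarrow> bool) \<Rightarrow> 'a \<Rightarrow> 'a \<Rightarrow> bool" where
  "equiv_of le x y \<longleftrightarrow> le x y \<and> le y x"

definition quot_proj :: "'a topology \<Rightarrow> ('a \<Rightarrow> 'a \<Rightarrow> bool) \<Rightarrow> 'a \<Rightarrow> 'a set" where
  "quot_proj X le x = {y \<in> topspace X. equiv_of le x y}"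

definition quot_top :: "'a topology \<Rightarrow> ('a \<Rightarrow> 'a \<Rightarrow> bool) \<Rightarrow> 'a set topology" where
  "quot_top X le = topology (\<lambda>U. U \<subseteq> quot_proj X le ` topspace X \<and>
      openin X {x \<in> topspace X. quot_proj X le x \<in> U})"

definition quot_le :: "('a \<Rightarrow> 'a \<Rightarrow> bool) \<Rightarrow> 'a set \<Rightarrow> 'a set \<Rightarrow> bool" where
  "quot_le le A B \<longleftrightarrow> (\<exists>x\<in>A. \<exists>y\<in>B. le x y)"

definition preorder_embedding ::
  "'a topology \<Rightarrow> ('a \<Rightarrow> 'a \<Rightarrow> bool) \<Rightarrow> 'b topology \<Rightarrow> ('b \<Rightarrow> 'b \<Rightarrow> bool) \<Rightarrow> ('a \<Rightarrow> 'b) \<Rightarrow> bool" where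
  "preorder_embedding X le Y le' e \<longleftrightarrow>
     continuous_map X Y e \<and> isotone X le le' e \<and> inj_on e (topspace X) \<and>
     embedding_map X Y e \<and>
     (\<forall>x\<in>topspace X. \<forall>y\<in>topspace X. le' (e x) (e y) \<longrightarrow> le x y)"

definition order_compactification ::
  "'a topology \<Rightarrow> ('a \<Rightarrow> 'a \<Rightarrow> bool) \<Rightarrow> 'b topology \<Rightarrow> ('b \<Rightarrow> 'b \<Rightarrow> bool) \<Rightarrow> ('a \<Rightarrow> 'b) \<Rightarrow> bool" where
  "order_compactification X le Y le' c \<longleftrightarrow>
     preorder_embedding X le Y le' c \<and> Y closure_of (c ` topspace X) = topspace Y \<and>
     compact_space Y \<and> Hausdorff_space Y \<and> T2_ordered Y le'"

definition compact_le ::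
  "'a topology \<Rightarrow> 'b topology \<Rightarrow> ('b \<Rightarrow> 'b \<Rightarrow> bool) \<Rightarrow> ('a \<Rightarrow> 'b) \<Rightarrow>
   'c topology \<Rightarrow> ('c \<Rightarrow> 'c \<Rightarrow> bool) \<Rightarrow> ('a \<Rightarrow> 'c) \<Rightarrow> bool" where
  "compact_le X Y1 le1 c1 Y2 le2 c2 \<longleftrightarrow>
     (\<exists>C. continuous_map Y2 Y1 C \<and> isotone Y2 le2 le1 C \<and> (\<forall>x\<in>topspace X. C (c2 x) = c1 x))"

definition compact_equiv ::
  "'a topology \<Rightarrow> 'b topology \<Rightarrow> ('b \<Rightarrow> 'b \<Rightarrow> bool) \<Rightarrow> ('a \<Rightarrow> 'b) \<Rightarrow>
   'c topology \<Rightarrow> ('c \<Rightarrow> 'c \<Rightarrow> bool) \<Rightarrow> ('a \<Rightarrow> 'c) \<Rightarrow> bool" where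
  "compact_equiv X Y1 le1 c1 Y2 le2 c2 \<longleftrightarrow>
     compact_le X Y1 le1 c1 Y2 le2 c2 \<and> compact_le X Y2 le2 c2 Y1 le1 c1"

definition nachbin_compactification ::
  "'a topology \<Rightarrow> ('a \<Rightarrow> 'a \<Rightarrow> bool) \<Rightarrow> 'b topology \<Rightarrow> ('b \<Rightarrow> 'b \<Rightarrow> bool) \<Rightarrow> ('a \<Rightarrow> 'b) \<Rightarrow> bool" where
  "nachbin_compactification X le Y le' n \<longleftrightarrow>
     order_compactification X le Y le' n \<and>
     (\<forall>f\<in>cont_iso X le. \<exists>g\<in>cont_iso Y le'. \<forall>x\<in>topspace X. g (n x) = f x)"

definition stone_cech :: "'a topology \<Rightarrow> 'b topology \<Rightarrow> ('a \<Rightarrow> 'b) \<Rightarrow> bool" where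
  "stone_cech X B b \<longleftrightarrow>
     embedding_map X B b \<and> B closure_of (b ` topspace X) = topspace B \<and>
     compact_space B \<and> Hausdorff_space B \<and>
     (\<forall>f. continuous_map X unit_interval f \<longrightarrow>
        (\<exists>g. continuous_map B unit_interval g \<and> (\<forall>x\<in>topspace X. g (b x) = f x)))"

text \<open>The preorder on beta E: G(le_beta) = intersection of the G of the extensions
  f~ of f o beta^-1, f ranging over the continuous isotone functions on E.
  (The extension is unique on topspace B, so quantifying over all extensions is the same.)\<close>
definition beta_le :: "'a topology \<Rightarrow> ('a \<Rightarrow> 'a \<Rightarrow> bool) \<Rightarrow> 'b topology \<Rightarrow> ('a \<Rightarrow> 'b) \<Rightarrow> 'b \<Rightarrow> 'b \<Rightarrow> bool" where
  "beta_le X le B b x y \<longleftrightarrow>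
     (\<forall>f\<in>cont_iso X le. \<forall>g. continuous_map B unit_interval g \<and> (\<forall>z\<in>topspace X. g (b z) = f z)
        \<longrightarrow> g x \<le> g y)"

end

theory Submission imports Defs begin
definition down :: "'a topology \<Rightarrow> ('a \<Rightarrow> 'a \<Rightarrow> bool) \<Rightarrow> 'a set \<Rightarrow> 'a set" where
  "down N le K = {x\<in>topspace N. \<exists>y\<in>K. le x y}"
definition up :: "'a topology \<Rightarrow> ('a \<Rightarrow> 'a \<Rightarrow> bool) \<Rightarrow> 'a set \<Rightarrow> 'a set" where
  "up N le K = {x\<in>topspace N. \<exists>y\<in>K. le y x}"

lemma down_closed:
  assumes "compact_space N" "Hausdorff_space N" "closedin (prod_topology N N) (graph_rel N le)"
    "closedin N K"
  shows "closedin N (down N le K)"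
proof -
  have K: "K \<subseteq> topspace N" using assms(4) closedin_subset by blast
  have eq: "down N le K = fst ` (graph_rel N le \<inter> (topspace N \<times> K))"
    using K by (force simp: down_def graph_rel_def)
  have "closedin (prod_topology N N) (graph_rel N le \<inter> (topspace N \<times> K))"
    using assms by (intro closedin_Int) (auto simp: closedin_prod_Times_iff)
  moreover have "compact_space (prod_topology N N)"
    using assms(1) compact_space_prod_topology by blast
  ultimately have "compactin (prod_topology N N) (graph_rel N le \<inter> (topspace N \<times> K))"
    by (simp add: closedin_compact_space)
  then have "compactin N (fst ` (graph_rel N le \<inter> (topspace N \<times> K)))"
    using image_compactin continuous_map_fst by blast
  then show ?thesis using eq compactin_imp_closedin assms(2) by metis
qed

lemma up_closed:
  assumes "compact_space N" "Hausdorff_space N" "closedin (prod_topology N N) (graph_rel N le)"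
    "closedin N K"
  shows "closedin N (up N le K)"
proof -
  have K: "K \<subseteq> topspace N" using assms(4) closedin_subset by blast
  have eq: "up N le K = snd ` (graph_rel N le \<inter> (K \<times> topspace N))"
    using K by (force simp: up_def graph_rel_def)
  have "closedin (prod_topology N N) (graph_rel N le \<inter> (K \<times> topspace N))"
    using assms by (intro closedin_Int) (auto simp: closedin_prod_Times_iff)
  moreover have "compact_space (prod_topology N N)"
    using assms(1) compact_space_prod_topology by blast
  ultimately have "compactin (prod_topology N N) (graph_rel N le \<inter> (K \<times> topspace N))"
    by (simp add: closedin_compact_space)
  then have "compactin N (snd ` (graph_rel N le \<inter> (K \<times> topspace N)))"
    using image_compactin continuous_map_snd by blast
  then show ?thesis using eq compactin_imp_closedin assms(2) by metis
qed

lemma Urysohn_pred: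
  assumes U: "openin X U" "P U" "S \<subseteq> U" "X closure_of U \<subseteq> topspace X - T"
    and PT: "P (topspace X - T)" and cT: "closedin X T"
    and interp: "\<And>x y. openin X x \<Longrightarrow> P x \<Longrightarrow> openin X y \<Longrightarrow> P y \<Longrightarrow> X closure_of x \<subseteq> y
        \<Longrightarrow> \<exists>z. openin X z \<and> P z \<and> X closure_of x \<subseteq> z \<and> X closure_of z \<subseteq> y"
  obtains f :: "'a \<Rightarrow> real" where "continuous_map X (top_of_set {0..1}) f" "f ` S \<subseteq> {0}" "f ` T \<subseteq> {1}"
    "\<And>x y. (\<And>V. openin X V \<Longrightarrow> P V \<Longrightarrow> y \<in> V \<Longrightarrow> x \<in> V) \<Longrightarrow> f x \<le> f y"
proof -
  have "\<exists>G :: real \<Rightarrow> 'a set. G 0 = U \<and> G 1 = topspace X - T \<and>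
               (\<forall>x \<in> dyadics \<inter> {0..1}. \<forall>y \<in> dyadics \<inter> {0..1}. x < y \<longrightarrow> (openin X (G x) \<and> P (G x)) \<and> (openin X (G y) \<and> P (G y)) \<and> X closure_of (G x) \<subseteq> G y)"
  proof (rule recursion_on_dyadic_fractions)
    show "(openin X U \<and> P U) \<and> (openin X (topspace X - T) \<and> P (topspace X - T)) \<and> X closure_of U \<subseteq> topspace X - T"
      using U PT cT by blast
    show "\<exists>z. ((openin X x \<and> P x) \<and> (openin X z \<and> P z) \<and> X closure_of x \<subseteq> z) \<and> (openin X z \<and> P z) \<and> (openin X y \<and> P y) \<and> X closure_of z \<subseteq> y"
      if "(openin X x \<and> P x) \<and> (openin X y \<and> P y) \<and> X closure_of x \<subseteq> y" for x y
      using interp that by metis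
    show "(openin X x \<and> P x) \<and> (openin X z \<and> P z) \<and> X closure_of x \<subseteq> z"
      if "(openin X x \<and> P x) \<and> (openin X y \<and> P y) \<and> X closure_of x \<subseteq> y" and "(openin X y \<and> P y) \<and> (openin X z \<and> P z) \<and> X closure_of y \<subseteq> z" for x y z
      using that by (meson closure_of_subset openin_subset subset_trans)
  qed
  then obtain G :: "real \<Rightarrow> 'a set"
      where G0: "G 0 = U" and G1: "G 1 = topspace X - T"
        and GG: "\<And>x y. \<lbrakk>x \<in> dyadics; y \<in> dyadics; 0 \<le> x; x < y; y \<le> 1\<rbrakk>
                      \<Longrightarrow> (openin X (G x) \<and> P (G x)) \<and> (openin X (G y) \<and> P (G y)) \<and> X closure_of (G x) \<subseteq> G y"
    by (smt (verit, del_insts) Int_iff atLeastAtMost_iff)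
  have G: "\<And>x y. \<lbrakk>x \<in> dyadics; y \<in> dyadics; 0 \<le> x; x < y; y \<le> 1\<rbrakk>
                      \<Longrightarrow> openin X (G x) \<and> openin X (G y) \<and> X closure_of (G x) \<subseteq> G y"
    using GG by blast
  have PG: "P (G r)" if "r \<in> dyadics \<inter> {0..1}" for r
  proof (cases "r = 1")
    case True then show ?thesis using G1 PT by simp
  next
    case False
    then have "r < 1" using that by auto
    moreover have "(1::real) \<in> dyadics" by (force simp: dyadics_def)
    ultimately show ?thesis using GG[of r 1] that by auto
  qed
  define f where "f \<equiv> \<lambda>x. Inf(insert 1 {r. r \<in> dyadics \<inter> {0..1} \<and> x \<in> G r})"
  have f_ge: "f x \<ge> 0" if "x \<in> topspace X" for x
    unfolding f_def by (force intro: cInf_greatest)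
  moreover have f_le1: "f x \<le> 1" if "x \<in> topspace X" for x
  proof -
    have "bdd_below {r \<in> dyadics \<inter> {0..1}. x \<in> G r}"
      by (auto simp: bdd_below_def)
    then show ?thesis
       by (auto simp: f_def cInf_lower)
  qed
  ultimately have fim: "f \<in> topspace X \<rightarrow> {0..1}"
    by (auto simp: f_def)
  have 0: "0 \<in> dyadics \<inter> {0..1::real}" and 1: "1 \<in> dyadics \<inter> {0..1::real}"
    by (force simp: dyadics_def)+
  then have opeG: "openin X (G r)" if "r \<in> dyadics \<inter> {0..1}" for r
    using G G0 \<open>openin X U\<close> less_eq_real_def that by auto
  have "x \<in> G 0" if "x \<in> S" for x
    using G0 \<open>S \<subseteq> U\<close> that by blast
  with 0 have fimS: "f ` S \<subseteq> {0}"
    unfolding f_def by (force intro!: cInf_eq_minimum)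
  have False if "r \<in> dyadics" "0 \<le> r" "r < 1" "x \<in> G r" "x \<in> T" for r x
    using G [of r 1] 1
    by (smt (verit, best) DiffD2 G1 Int_iff closure_of_subset inf.orderE openin_subset that)
  then have "r\<ge>1" if "r \<in> dyadics" "0 \<le> r" "r \<le> 1" "x \<in> G r" "x \<in> T" for r x
    using linorder_not_le that by blast
  then have fimT: "f ` T \<subseteq> {1}"
    unfolding f_def by (force intro!: cInf_eq_minimum)
  have fle1: "f z \<le> 1" for z
    by (force simp: f_def intro: cInf_lower)
  have fle: "f z \<le> x" if "x \<in> dyadics \<inter> {0..1}" "z \<in> G x" for z x
    using that by (force simp: f_def intro: cInf_lower)
  have *: "b \<le> f z" if "b \<le> 1" "\<And>x. \<lbrakk>x \<in> dyadics \<inter> {0..1}; z \<in> G x\<rbrakk> \<Longrightarrow> b \<le> x" for z b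
    using that by (force simp: f_def intro: cInf_greatest)
  have **: "r \<le> f x" if r: "r \<in> dyadics \<inter> {0..1}" "x \<notin> G r" for r x
  proof (rule *)
    show "r \<le> s" if "s \<in> dyadics \<inter> {0..1}" and "x \<in> G s" for s :: real
      using that r G [of s r] by (force simp: dest: closure_of_subset openin_subset)
  qed (use that in force)

  have "\<exists>U. openin X U \<and> x \<in> U \<and> (\<forall>y \<in> U. \<bar>f y - f x\<bar> < \<epsilon>)"
    if "x \<in> topspace X" and "0 < \<epsilon>" for x \<epsilon>
  proof -
    have A: "\<exists>r. r \<in> dyadics \<inter> {0..1} \<and> r < y \<and> \<bar>r - y\<bar> < d" if "0 < y" "y \<le> 1" "0 < d" for y d::real
    proof -
      obtain n q r 
        where "of_nat q / 2^n < y" "y < of_nat r / 2^n" "\<bar>q / 2^n - r / 2^n \<bar> < d"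
        by (smt (verit, del_insts) padic_rational_approximation_straddle_pos  \<open>0 < d\<close> \<open>0 < y\<close>) 
      then show ?thesis
        unfolding dyadics_def
        using divide_eq_0_iff that(2) by fastforce
    qed
    have B: "\<exists>r. r \<in> dyadics \<inter> {0..1} \<and> y < r \<and> \<bar>r - y\<bar> < d" if "0 \<le> y" "y < 1" "0 < d" for y d::real
    proof -
      obtain n q r 
        where "of_nat q / 2^n \<le> y" "y < of_nat r / 2^n" "\<bar>q / 2^n - r / 2^n \<bar> < d"
        using padic_rational_approximation_straddle_pos_le
        by (smt (verit, del_insts) \<open>0 < d\<close> \<open>0 \<le> y\<close>) 
      then show ?thesis
        apply (clarsimp simp: dyadics_def)
        using divide_eq_0_iff \<open>y < 1\<close>
        by (smt (verit) divide_nonneg_nonneg divide_self of_nat_0_le_iff of_nat_1 power_0 zero_le_power) 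
    qed
    show ?thesis
    proof (cases "f x = 0")
      case True
      with B[of 0] obtain r where r: "r \<in> dyadics \<inter> {0..1}" "0 < r" "\<bar>r\<bar> < \<epsilon>/2"
        by (smt (verit) \<open>0 < \<epsilon>\<close> half_gt_zero)
      show ?thesis
      proof (intro exI conjI)
        show "openin X (G r)"
          using opeG r(1) by blast
        show "x \<in> G r"
          using True ** r by force
        show "\<forall>y \<in> G r. \<bar>f y - f x\<bar> < \<epsilon>"
          using f_ge \<open>openin X (G r)\<close> fle openin_subset r by (fastforce simp: True)
      qed
    next
      case False
      show ?thesis 
      proof (cases "f x = 1")
        case True
        with A[of 1] obtain r where r: "r \<in> dyadics \<inter> {0..1}" "r < 1" "\<bar>r-1\<bar> < \<epsilon>/2"
          by (smt (verit) \<open>0 < \<epsilon>\<close> half_gt_zero)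
        define G' where "G' \<equiv> topspace X - X closure_of G r"
        show ?thesis
        proof (intro exI conjI)
          show "openin X G'"
            unfolding G'_def by fastforce
          obtain r' where "r' \<in> dyadics \<and> 0 \<le> r' \<and> r' \<le> 1 \<and> r < r' \<and> \<bar>r' - r\<bar> < 1 - r"
            using B r by force 
          moreover
          have "1 - r \<in> dyadics" "0 \<le> r"
            using 1 r dyadics_diff by force+
          ultimately have "x \<notin> X closure_of G r"
            using G True r fle by force
          then show "x \<in> G'"
            by (simp add: G'_def that)
          show "\<forall>y \<in> G'. \<bar>f y - f x\<bar> < \<epsilon>"
            using ** f_le1 in_closure_of r by (fastforce simp: True G'_def)
        qed
      next
        case False
        have "0 < f x" "f x < 1"
          using fle1 f_ge that(1) \<open>f x \<noteq> 0\<close> \<open>f x \<noteq> 1\<close> by (metis order_le_less) +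
        obtain r where r: "r \<in> dyadics \<inter> {0..1}" "r < f x" "\<bar>r - f x\<bar> < \<epsilon> / 2"
          using A \<open>0 < \<epsilon>\<close> \<open>0 < f x\<close> \<open>f x < 1\<close> by (smt (verit, best) half_gt_zero)
        obtain r' where r': "r' \<in> dyadics \<inter> {0..1}" "f x < r'" "\<bar>r' - f x\<bar> < \<epsilon> / 2"
          using B \<open>0 < \<epsilon>\<close> \<open>0 < f x\<close> \<open>f x < 1\<close> by (smt (verit, best) half_gt_zero)
        have "r < 1"
          using \<open>f x < 1\<close> r(2) by force
        show ?thesis
        proof (intro conjI exI)
          show "openin X (G r' - X closure_of G r)"
            using closedin_closure_of opeG r' by blast
          have "x \<in> X closure_of G r \<Longrightarrow> False"
            using B [of r "f x - r"] r \<open>r < 1\<close> G [of r] fle by force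
          then show "x \<in> G r' - X closure_of G r"
            using ** r' by fastforce
          show "\<forall>y\<in>G r' - X closure_of G r. \<bar>f y - f x\<bar> < \<epsilon>"
            using r r' ** G closure_of_subset field_sum_of_halves fle openin_subset subset_eq
            by (smt (verit) DiffE opeG)
        qed
      qed
    qed
  qed
  then have contf: "continuous_map X (top_of_set {0..1}) f"
    by (auto simp: Met_TC.continuous_map_to_metric dist_real_def continuous_map_in_subtopology fim abs_minus_commute simp flip: mtopology_is_euclidean)
  have mono: "f x \<le> f y" if H: "\<And>V. openin X V \<Longrightarrow> P V \<Longrightarrow> y \<in> V \<Longrightarrow> x \<in> V" for x y
  proof -
    have sub: "insert 1 {r. r \<in> dyadics \<inter> {0..1} \<and> y \<in> G r} \<subseteq> insert 1 {r. r \<in> dyadics \<inter> {0..1} \<and> x \<in> G r}"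
      using H PG opeG by blast
    have "bdd_below (insert 1 {r. r \<in> dyadics \<inter> {0..1} \<and> x \<in> G r})"
      by (auto simp: bdd_below_def intro!: exI[of _ 0])
    then show ?thesis unfolding f_def
      using cInf_superset_mono[OF _ _ sub] by blast
  qed
  show thesis
    by (rule that[OF contf fimS fimT]) (rule mono, blast)
qed
definition decr :: "'a topology \<Rightarrow> ('a \<Rightarrow> 'a \<Rightarrow> bool) \<Rightarrow> 'a set \<Rightarrow> bool" where
  "decr N le V \<longleftrightarrow> V \<subseteq> topspace N \<and> (\<forall>x\<in>topspace N. \<forall>y\<in>V. le x y \<longrightarrow> x \<in> V)"
definition incr :: "'a topology \<Rightarrow> ('a \<Rightarrow> 'a \<Rightarrow> bool) \<Rightarrow> 'a set \<Rightarrow> bool" where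
  "incr N le V \<longleftrightarrow> V \<subseteq> topspace N \<and> (\<forall>x\<in>topspace N. \<forall>y\<in>V. le y x \<longrightarrow> x \<in> V)"

lemma ordered_sep:
  assumes cN: "compact_space N" and hN: "Hausdorff_space N" and T2: "T2_preordered N le"
    and A: "closedin N A" "decr N le A" and B: "closedin N B" "incr N le B" and dj: "disjnt A B"
  shows "\<exists>U V. openin N U \<and> openin N V \<and> decr N le U \<and> incr N le V \<and> A \<subseteq> U \<and> B \<subseteq> V \<and> disjnt U V"
proof -
  have g: "closedin (prod_topology N N) (graph_rel N le)" and po: "preorder_on (topspace N) le"
    using T2 by (auto simp: T2_preordered_def)
  have "normal_space N" using cN hN compact_Hausdorff_or_regular_imp_normal_space by blast
  then obtain W W' where W: "openin N W" "openin N W'" "A \<subseteq> W" "B \<subseteq> W'" "disjnt W W'"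
    using A(1) B(1) dj unfolding normal_space_def by meson
  define U where "U = topspace N - up N le (topspace N - W)"
  define V where "V = topspace N - down N le (topspace N - W')"
  have cu: "closedin N (up N le (topspace N - W))"
    by (rule up_closed[OF cN hN g]) (use W in auto)
  have cd: "closedin N (down N le (topspace N - W'))"
    by (rule down_closed[OF cN hN g]) (use W in auto)
  have oU: "openin N U" using cu unfolding U_def by (intro openin_diff) auto
  have oV: "openin N V" using cd unfolding V_def by (intro openin_diff) auto
  have refl: "\<And>x. x \<in> topspace N \<Longrightarrow> le x x" and trans: "\<And>x y z. x \<in> topspace N \<Longrightarrow> y \<in> topspace N \<Longrightarrow> z \<in> topspace N \<Longrightarrow> le x y \<Longrightarrow> le y z \<Longrightarrow> le x z"
    using po unfolding preorder_on_def by blast+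
  have dU: "decr N le U"
    unfolding decr_def
  proof (intro conjI ballI impI)
    show "U \<subseteq> topspace N" unfolding U_def by blast
    fix x y assume xy: "x \<in> topspace N" "y \<in> U" "le x y"
    show "x \<in> U"
    proof (rule ccontr)
      assume "x \<notin> U"
      then obtain z where z: "z \<in> topspace N - W" "le z x" using xy(1) unfolding U_def up_def by blast
      then have "le z y" using trans[of z x y] xy U_def by blast
      then show False using xy(2) z unfolding U_def up_def by blast
    qed
  qed
  have iV: "incr N le V"
    unfolding incr_def
  proof (intro conjI ballI impI)
    show "V \<subseteq> topspace N" unfolding V_def by blast
    fix x y assume xy: "x \<in> topspace N" "y \<in> V" "le y x"
    show "x \<in> V"
    proof (rule ccontr)
      assume "x \<notin> V"
      then obtain z where z: "z \<in> topspace N - W'" "le x z" using xy(1) unfolding V_def down_def by blast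
      then have "le y z" using trans[of y x z] xy V_def by blast
      then show False using xy(2) z unfolding V_def down_def by blast
    qed
  qed
  have AU: "A \<subseteq> U"
  proof
    fix a assume a: "a \<in> A"
    have aN: "a \<in> topspace N" using a A(1) closedin_subset by blast
    show "a \<in> U"
    proof (rule ccontr)
      assume "a \<notin> U"
      then obtain z where z: "z \<in> topspace N - W" "le z a" using aN unfolding U_def up_def by blast
      then have "z \<in> A" using A(2) a unfolding decr_def by blast
      then show False using z W(3) by blast
    qed
  qed
  have BV: "B \<subseteq> V"
  proof
    fix a assume a: "a \<in> B"
    have aN: "a \<in> topspace N" using a B(1) closedin_subset by blast
    show "a \<in> V"
    proof (rule ccontr)
      assume "a \<notin> V"
      then obtain z where z: "z \<in> topspace N - W'" "le a z" using aN unfolding V_def down_def by blast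
      then have "z \<in> B" using B(2) a unfolding incr_def by blast
      then show False using z W(4) by blast
    qed
  qed
  have "U \<subseteq> W" "V \<subseteq> W'"
    using refl unfolding U_def V_def up_def down_def by auto
  then have "disjnt U V" using W(5) by (meson disjnt_subset1 disjnt_subset2)
  then show ?thesis using oU oV dU iV AU BV by blast
qed

lemma nachbin_sep:
  assumes cN: "compact_space N" and hN: "Hausdorff_space N" and T2: "T2_preordered N le"
    and p: "p \<in> topspace N" and q: "q \<in> topspace N" and npq: "\<not> le p q"
  shows "\<exists>h\<in>cont_iso N le. h q = 0 \<and> h p = 1"
proof -
  have g: "closedin (prod_topology N N) (graph_rel N le)" and po: "preorder_on (topspace N) le"
    using T2 by (auto simp: T2_preordered_def)
  have refl: "\<And>x. x \<in> topspace N \<Longrightarrow> le x x" and trans: "\<And>x y z. x \<in> topspace N \<Longrightarrow> y \<in> topspace N \<Longrightarrow> z \<in> topspace N \<Longrightarrow> le x y \<Longrightarrow> le y z \<Longrightarrow> le x z"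
    using po unfolding preorder_on_def by blast+
  define P where "P = decr N le"
  define S where "S = down N le {q}"
  define T where "T = up N le {p}"
  have cS: "closedin N S" unfolding S_def
    by (rule down_closed[OF cN hN g]) (use q hN in \<open>simp add: Hausdorff_imp_t1_space closedin_t1_singleton\<close>)
  have cT: "closedin N T" unfolding T_def
    by (rule up_closed[OF cN hN g]) (use p hN in \<open>simp add: Hausdorff_imp_t1_space closedin_t1_singleton\<close>)
  have dS: "decr N le S" unfolding S_def decr_def down_def using q trans by blast
  have iT: "incr N le T" unfolding T_def incr_def up_def using p trans by blast
  have djST: "disjnt S T" unfolding S_def T_def down_def up_def disjnt_def
    using npq trans p q by blast
  have interp: "\<exists>z. openin N z \<and> P z \<and> N closure_of x \<subseteq> z \<and> N closure_of z \<subseteq> y"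
    if "openin N x" "P x" "openin N y" "P y" "N closure_of x \<subseteq> y" for x y
  proof -
    define A where "A = down N le (N closure_of x)"
    have cA: "closedin N A" unfolding A_def by (rule down_closed[OF cN hN g]) (rule closedin_closure_of)
    have ct: "N closure_of x \<subseteq> topspace N" by (rule closure_of_subset_topspace)
    have dA: "decr N le A" unfolding A_def decr_def down_def
    proof (intro conjI ballI impI)
      fix a b assume "a \<in> topspace N" "b \<in> {w \<in> topspace N. \<exists>v\<in>N closure_of x. le w v}" "le a b"
      then show "a \<in> {w \<in> topspace N. \<exists>v\<in>N closure_of x. le w v}"
        using trans ct by blast
    qed auto
    have cB: "closedin N (topspace N - y)" using that by blast
    have iB: "incr N le (topspace N - y)" using that(4) unfolding P_def decr_def incr_def by blast
    have Ay: "A \<subseteq> y" using that(4,5) unfolding P_def decr_def A_def down_def by blast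
    then have dj: "disjnt A (topspace N - y)" by (auto simp: disjnt_def)
    obtain U V where UV: "openin N U" "openin N V" "decr N le U" "incr N le V" "A \<subseteq> U"
      "topspace N - y \<subseteq> V" "disjnt U V"
      using ordered_sep[OF cN hN T2 cA dA cB iB dj] by blast
    have "N closure_of x \<subseteq> A" unfolding A_def down_def
      using refl ct by blast
    moreover have "N closure_of U \<subseteq> topspace N - V"
      using UV openin_subset[OF UV(1)] by (intro closure_of_minimal) (auto simp: disjnt_def)
    ultimately show ?thesis using UV unfolding P_def by blast
  qed
  obtain U V where UV: "openin N U" "openin N V" "decr N le U" "incr N le V" "S \<subseteq> U"
      "T \<subseteq> V" "disjnt U V"
    using ordered_sep[OF cN hN T2 cS dS cT iT djST] by blast
  have cl: "N closure_of U \<subseteq> topspace N - T"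
  proof -
    have "N closure_of U \<subseteq> topspace N - V"
      using UV openin_subset[OF UV(1)] by (intro closure_of_minimal) (auto simp: disjnt_def)
    then show ?thesis using UV by blast
  qed
  have UP: "P U" using UV(3) unfolding P_def .
  have PT: "P (topspace N - T)" using iT unfolding P_def decr_def incr_def by blast
  obtain f :: "'a \<Rightarrow> real" where f: "continuous_map N (top_of_set {0..1}) f" "f ` S \<subseteq> {0}" "f ` T \<subseteq> {1}"
    "\<And>x y. (\<And>V. openin N V \<Longrightarrow> P V \<Longrightarrow> y \<in> V \<Longrightarrow> x \<in> V) \<Longrightarrow> f x \<le> f y"
    using Urysohn_pred[of N U P S T, OF UV(1) UP UV(5) cl PT cT interp] by blast
  have iso: "isotone N le (\<le>) f"
    unfolding isotone_def
  proof (intro ballI impI)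
    fix x y assume "x \<in> topspace N" "y \<in> topspace N" "le x y"
    then show "f x \<le> f y" by (intro f(4)) (auto simp: P_def decr_def)
  qed
  have "q \<in> S" unfolding S_def down_def using q refl by blast
  moreover have "p \<in> T" unfolding T_def up_def using p refl by blast
  ultimately show ?thesis using f iso unfolding cont_iso_def by blast
qed
lemma istopology_quot: "istopology (\<lambda>U. U \<subseteq> quot_proj X le ` topspace X \<and>
      openin X {x \<in> topspace X. quot_proj X le x \<in> U})"
  unfolding istopology_def
proof (rule conjI; intro allI impI)
  fix S T assume S: "S \<subseteq> quot_proj X le ` topspace X \<and> openin X {x \<in> topspace X. quot_proj X le x \<in> S}"
    and T: "T \<subseteq> quot_proj X le ` topspace X \<and> openin X {x \<in> topspace X. quot_proj X le x \<in> T}"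
  have "{x \<in> topspace X. quot_proj X le x \<in> S \<inter> T} = {x \<in> topspace X. quot_proj X le x \<in> S} \<inter> {x \<in> topspace X. quot_proj X le x \<in> T}"
    by blast
  then show "S \<inter> T \<subseteq> quot_proj X le ` topspace X \<and> openin X {x \<in> topspace X. quot_proj X le x \<in> S \<inter> T}"
    using S T by auto
next
  fix K assume K: "\<forall>S\<in>K. S \<subseteq> quot_proj X le ` topspace X \<and> openin X {x \<in> topspace X. quot_proj X le x \<in> S}"
  have "{x \<in> topspace X. quot_proj X le x \<in> \<Union>K} = \<Union>((\<lambda>S. {x \<in> topspace X. quot_proj X le x \<in> S}) ` K)"
    by blast
  moreover have "openin X (\<Union>((\<lambda>S. {x \<in> topspace X. quot_proj X le x \<in> S}) ` K))"
    using K by (intro openin_Union) blast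
  ultimately show "\<Union>K \<subseteq> quot_proj X le ` topspace X \<and> openin X {x \<in> topspace X. quot_proj X le x \<in> \<Union>K}"
    using K by auto
qed

lemma openin_quot_top: "openin (quot_top X le) U \<longleftrightarrow> U \<subseteq> quot_proj X le ` topspace X \<and>
      openin X {x \<in> topspace X. quot_proj X le x \<in> U}"
  unfolding quot_top_def by (simp only: topology_inverse'[OF istopology_quot[of X le]])

lemma topspace_quot_top: "topspace (quot_top X le) = quot_proj X le ` topspace X"
proof -
  have "{x \<in> topspace X. quot_proj X le x \<in> quot_proj X le ` topspace X} = topspace X" by blast
  then have "openin (quot_top X le) (quot_proj X le ` topspace X)"
    unfolding openin_quot_top by simp
  then have "quot_proj X le ` topspace X \<subseteq> topspace (quot_top X le)"
    using openin_subset by blast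
  moreover have "topspace (quot_top X le) \<subseteq> quot_proj X le ` topspace X"
    using openin_quot_top openin_topspace by blast
  ultimately show ?thesis by blast
qed

lemma quot_proj_cont: "continuous_map X (quot_top X le) (quot_proj X le)"
  unfolding continuous_map_def
proof (intro conjI allI impI)
  show "quot_proj X le \<in> topspace X \<rightarrow> topspace (quot_top X le)"
    by (auto simp: topspace_quot_top)
  fix U assume "openin (quot_top X le) U"
  then show "openin X {x \<in> topspace X. quot_proj X le x \<in> U}"
    unfolding openin_quot_top by blast
qed

lemma quot_cont_from:
  assumes "continuous_map X Z (\<lambda>x. h (quot_proj X le x))"
  shows "continuous_map (quot_top X le) Z h"
  unfolding continuous_map_def
proof (intro conjI allI impI)
  show "h \<in> topspace (quot_top X le) \<rightarrow> topspace Z"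
    using assms by (auto simp: topspace_quot_top continuous_map_def)
  fix V assume V: "openin Z V"
  have eq: "{x \<in> topspace X. quot_proj X le x \<in> {c \<in> topspace (quot_top X le). h c \<in> V}}
      = {x \<in> topspace X. h (quot_proj X le x) \<in> V}"
    by (auto simp: topspace_quot_top)
  have "openin X {x \<in> topspace X. h (quot_proj X le x) \<in> V}"
    using assms V by (simp add: continuous_map_def)
  then show "openin (quot_top X le) {c \<in> topspace (quot_top X le). h c \<in> V}"
    unfolding openin_quot_top eq by (auto simp: topspace_quot_top)
qed

lemma quot_self: "preorder_on (topspace X) le \<Longrightarrow> x \<in> topspace X \<Longrightarrow> x \<in> quot_proj X le x"
  by (auto simp: quot_proj_def equiv_of_def preorder_on_def)

lemma quot_mem: "y \<in> quot_proj X le x \<Longrightarrow> y \<in> topspace X \<and> le x y \<and> le y x"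
  by (auto simp: quot_proj_def equiv_of_def)

lemma quot_eq: "preorder_on (topspace X) le \<Longrightarrow> x \<in> topspace X \<Longrightarrow> y \<in> topspace X \<Longrightarrow>
   quot_proj X le x = quot_proj X le y \<longleftrightarrow> le x y \<and> le y x"
proof
  assume po: "preorder_on (topspace X) le" and x: "x \<in> topspace X" and y: "y \<in> topspace X"
  assume "quot_proj X le x = quot_proj X le y"
  moreover have "x \<in> quot_proj X le x" using quot_self[OF po x] .
  ultimately have "x \<in> quot_proj X le y" by simp
  then show "le x y \<and> le y x" using quot_mem[OF \<open>x \<in> quot_proj X le y\<close>] by auto
next
  assume po: "preorder_on (topspace X) le" and x: "x \<in> topspace X" and y: "y \<in> topspace X"
    and xy: "le x y \<and> le y x"
  have tr: "\<And>a b c. a \<in> topspace X \<Longrightarrow> b \<in> topspace X \<Longrightarrow> c \<in> topspace X \<Longrightarrow> le a b \<Longrightarrow> le b c \<Longrightarrow> le a c"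
    using po unfolding preorder_on_def by blast
  show "quot_proj X le x = quot_proj X le y"
    unfolding quot_proj_def equiv_of_def
  proof (rule set_eqI)
    fix z
    have H: "(le x z \<and> le z x) = (le y z \<and> le z y)" if z: "z \<in> topspace X"
    proof
      assume "le x z \<and> le z x" then show "le y z \<and> le z y"
        using tr[of y x z] tr[of z x y] x y z xy by simp
    next
      assume "le y z \<and> le z y" then show "le x z \<and> le z x"
        using tr[of x y z] tr[of z y x] x y z xy by simp
    qed
    show "z \<in> {z \<in> topspace X. le x z \<and> le z x} \<longleftrightarrow> z \<in> {z \<in> topspace X. le y z \<and> le z y}"
      using H by auto
  qed
qed

lemma quot_some: "preorder_on (topspace X) le \<Longrightarrow> x \<in> topspace X \<Longrightarrow>
   (SOME z. z \<in> quot_proj X le x) \<in> quot_proj X le x"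
  using quot_self by (metis someI)

lemma emb_by_preimages:
  assumes "continuous_map X Y f" "inj_on f (topspace X)"
    and "\<And>W. openin X W \<Longrightarrow> \<exists>V. openin Y V \<and> W = {x \<in> topspace X. f x \<in> V}"
  shows "embedding_map X Y f"
  unfolding embedding_map_def homeomorphic_map_def quotient_map_def
proof (intro conjI allI impI)
  show "f ` topspace X = topspace (subtopology Y (f ` topspace X))"
    using assms(1) continuous_map_image_subset_topspace by fastforce
  show "inj_on f (topspace X)" by fact
  fix U assume U: "U \<subseteq> topspace (subtopology Y (f ` topspace X))"
  then have Uim: "U \<subseteq> f ` topspace X" by auto
  show "openin X {x \<in> topspace X. f x \<in> U} = openin (subtopology Y (f ` topspace X)) U"
  proof
    assume "openin X {x \<in> topspace X. f x \<in> U}"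
    then obtain V where V: "openin Y V" "{x \<in> topspace X. f x \<in> U} = {x \<in> topspace X. f x \<in> V}"
      using assms(3) by blast
    have "U = f ` topspace X \<inter> V"
    proof
      show "U \<subseteq> f ` topspace X \<inter> V" using V(2) Uim by blast
      show "f ` topspace X \<inter> V \<subseteq> U" using V(2) by blast
    qed
    then show "openin (subtopology Y (f ` topspace X)) U"
      using V(1) by (auto simp: openin_subtopology)
  next
    assume "openin (subtopology Y (f ` topspace X)) U"
    then obtain V where V: "openin Y V" "U = V \<inter> f ` topspace X"
      by (auto simp: openin_subtopology)
    then have "{x \<in> topspace X. f x \<in> U} = {x \<in> topspace X. f x \<in> V}" by blast
    then show "openin X {x \<in> topspace X. f x \<in> U}"
      using V(1) assms(1) by (simp add: continuous_map_def)
  qed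
qed

lemma family_Hausdorff:
  assumes cont: "\<And>i. i \<in> I \<Longrightarrow> continuous_map Y euclideanreal (\<phi> i)"
    and sep: "\<And>d e. d \<in> topspace Y \<Longrightarrow> e \<in> topspace Y \<Longrightarrow> d \<noteq> e \<Longrightarrow> \<exists>i\<in>I. \<phi> i d \<noteq> \<phi> i e"
  shows "Hausdorff_space Y"
  unfolding Hausdorff_space_def
proof (intro allI impI)
  fix d e assume H: "d \<in> topspace Y \<and> e \<in> topspace Y \<and> d \<noteq> e"
  then obtain i where i: "i \<in> I" "\<phi> i d \<noteq> \<phi> i e" using sep by blast
  define m where "m = (\<phi> i d + \<phi> i e) / 2"
  have o1: "openin Y {x \<in> topspace Y. \<phi> i x \<in> {..<m}}" and o2: "openin Y {x \<in> topspace Y. \<phi> i x \<in> {m<..}}"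
    using openin_continuous_map_preimage[OF cont[OF i(1)], of "{..<m}"] openin_continuous_map_preimage[OF cont[OF i(1)], of "{m<..}"] by auto
  have dj: "disjnt {x \<in> topspace Y. \<phi> i x \<in> {..<m}} {x \<in> topspace Y. \<phi> i x \<in> {m<..}}"
    by (auto simp: disjnt_def)
  show "\<exists>U V. openin Y U \<and> openin Y V \<and> d \<in> U \<and> e \<in> V \<and> disjnt U V"
  proof (cases "\<phi> i d < \<phi> i e")
    case True
    then have "d \<in> {x \<in> topspace Y. \<phi> i x \<in> {..<m}}" "e \<in> {x \<in> topspace Y. \<phi> i x \<in> {m<..}}"
      using H unfolding m_def by auto
    then show ?thesis using o1 o2 dj by blast
  next
    case False
    then have "\<phi> i e < \<phi> i d" using i(2) by linarith
    then have "e \<in> {x \<in> topspace Y. \<phi> i x \<in> {..<m}}" "d \<in> {x \<in> topspace Y. \<phi> i x \<in> {m<..}}"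
      using H unfolding m_def by auto
    then show ?thesis using o1 o2 dj disjnt_sym by blast
  qed
qed

lemma family_closed_graph:
  assumes cont: "\<And>i. i \<in> I \<Longrightarrow> continuous_map Y euclideanreal (\<phi> i)"
    and R: "\<And>d e. d \<in> topspace Y \<Longrightarrow> e \<in> topspace Y \<Longrightarrow> R d e \<longleftrightarrow> (\<forall>i\<in>I. \<phi> i d \<le> \<phi> i e)"
  shows "closedin (prod_topology Y Y) (graph_rel Y R)"
  unfolding closedin_def
proof
  show "graph_rel Y R \<subseteq> topspace (prod_topology Y Y)" by (auto simp: graph_rel_def)
  show "openin (prod_topology Y Y) (topspace (prod_topology Y Y) - graph_rel Y R)"
  proof (subst openin_subopen, intro ballI)
    fix z assume z: "z \<in> topspace (prod_topology Y Y) - graph_rel Y R"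
    obtain d e where de: "z = (d, e)" by (cases z)
    have dY: "d \<in> topspace Y" and eY: "e \<in> topspace Y" and nR: "\<not> R d e"
      using z de by (auto simp: graph_rel_def)
    then obtain i where i: "i \<in> I" "\<phi> i e < \<phi> i d" using R by force
    define m where "m = (\<phi> i d + \<phi> i e) / 2"
    define U where "U = {x \<in> topspace Y. \<phi> i x \<in> {m<..}}"
    define V where "V = {x \<in> topspace Y. \<phi> i x \<in> {..<m}}"
    have oU: "openin Y U" and oV: "openin Y V"
      using openin_continuous_map_preimage[OF cont[OF i(1)], of "{..<m}"] openin_continuous_map_preimage[OF cont[OF i(1)], of "{m<..}"] unfolding U_def V_def by auto
    have "openin (prod_topology Y Y) (U \<times> V)" using oU oV by (simp add: openin_prod_Times_iff)
    moreover have "z \<in> U \<times> V" using de dY eY i unfolding U_def V_def m_def by auto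
    moreover have "U \<times> V \<subseteq> topspace (prod_topology Y Y) - graph_rel Y R"
    proof
      fix w assume w: "w \<in> U \<times> V"
      then obtain a b where ab: "w = (a, b)" "a \<in> U" "b \<in> V" by blast
      then have "\<phi> i b < \<phi> i a" unfolding U_def V_def by auto
      then have "\<not> R a b" using R[of a b] ab i unfolding U_def V_def by force
      then show "w \<in> topspace (prod_topology Y Y) - graph_rel Y R"
        using ab unfolding U_def V_def graph_rel_def by auto
    qed
    ultimately show "\<exists>T. openin (prod_topology Y Y) T \<and> z \<in> T \<and> T \<subseteq> topspace (prod_topology Y Y) - graph_rel Y R"
      by blast
  qed
qed

lemma finite_sep:
  assumes K: "compactin Y K"
    and cont: "\<And>i. i \<in> I \<Longrightarrow> continuous_map Y euclideanreal (\<phi> i)"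
    and sep: "\<And>e. e \<in> K \<Longrightarrow> \<exists>i\<in>I. \<phi> i e \<noteq> a i"
  shows "\<exists>J \<epsilon>. finite J \<and> J \<subseteq> I \<and> \<epsilon> > 0 \<and> (\<forall>e\<in>K. \<exists>i\<in>J. \<epsilon> \<le> \<bar>\<phi> i e - a i\<bar>)"
proof -
  define Ob where "Ob = (\<lambda>(i, n::nat). {x \<in> topspace Y. \<phi> i x \<in> {t. 1 / real (Suc n) < \<bar>t - a i\<bar>}})"
  have oO: "openin Y (Ob p)" if "p \<in> I \<times> UNIV" for p
  proof -
    obtain i n where p: "p = (i, n)" by (cases p)
    have "continuous_map Y euclideanreal (\<lambda>x. \<bar>\<phi> i x - a i\<bar>)"
      using cont[of i] that p by (intro continuous_map_real_abs continuous_map_diff) auto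
    from openin_continuous_map_preimage[OF this, of "{1 / real (Suc n)<..}"]
    have "openin Y {x \<in> topspace Y. \<phi> i x \<in> {t. 1 / real (Suc n) < \<bar>t - a i\<bar>}}"
      by simp
    then show ?thesis using p unfolding Ob_def by simp
  qed
  have cov: "K \<subseteq> \<Union>(Ob ` (I \<times> UNIV))"
  proof
    fix e assume e: "e \<in> K"
    then obtain i where i: "i \<in> I" "\<phi> i e \<noteq> a i" using sep by blast
    then have "0 < \<bar>\<phi> i e - a i\<bar>" by simp
    then obtain n where "1 / real (Suc n) < \<bar>\<phi> i e - a i\<bar>"
      using nat_approx_posE by metis
    moreover have "e \<in> topspace Y" using K e compactin_subset_topspace by blast
    ultimately have "e \<in> Ob (i, n)" unfolding Ob_def by simp
    moreover have "(i, n) \<in> I \<times> UNIV" using i by simp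
    ultimately show "e \<in> \<Union>(Ob ` (I \<times> UNIV))" by blast
  qed
  have ob: "\<forall>B\<in>Ob ` (I \<times> UNIV). openin Y B" using oO by blast
  have K2: "\<forall>U. (\<forall>B\<in>U. openin Y B) \<and> K \<subseteq> \<Union>U \<longrightarrow> (\<exists>F. finite F \<and> F \<subseteq> U \<and> K \<subseteq> \<Union>F)"
    using K unfolding compactin_def by (rule conjunct2)
  have "\<exists>F. finite F \<and> F \<subseteq> Ob ` (I \<times> UNIV) \<and> K \<subseteq> \<Union>F"
    using K2[rule_format, OF conjI[OF ob cov]] .
  then obtain F where F: "finite F" "F \<subseteq> Ob ` (I \<times> UNIV)" "K \<subseteq> \<Union>F" by blast
  obtain P where P: "P \<subseteq> I \<times> UNIV" "finite P" "F = Ob ` P"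
    using finite_subset_image[OF F(1) F(2)] by blast
  define n0 where "n0 = Max (insert 0 (snd ` P))"
  define \<epsilon> where "\<epsilon> = 1 / real (Suc n0)"
  show ?thesis
  proof (intro exI conjI ballI)
    show "finite (fst ` P)" using P by simp
    show "fst ` P \<subseteq> I" using P by auto
    show "0 < \<epsilon>" unfolding \<epsilon>_def by simp
    fix e assume e: "e \<in> K"
    have "e \<in> \<Union>(Ob ` P)" using F(3) P(3) e by blast
    then obtain p where p: "p \<in> P" "e \<in> Ob p" by blast
    obtain i n where pin: "p = (i, n)" by (cases p)
    have "n \<in> snd ` P" using p pin by force
    then have "n \<le> n0" unfolding n0_def by (intro Max_ge) (use P(2) in auto)
    then have "\<epsilon> \<le> 1 / real (Suc n)" unfolding \<epsilon>_def by (intro divide_left_mono) auto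
    moreover have "1 / real (Suc n) < \<bar>\<phi> i e - a i\<bar>" using p pin unfolding Ob_def by auto
    ultimately have "\<epsilon> \<le> \<bar>\<phi> i e - a i\<bar>" by linarith
    moreover have "i \<in> fst ` P" using p(1) pin by force
    ultimately show "\<exists>i\<in>fst ` P. \<epsilon> \<le> \<bar>\<phi> i e - a i\<bar>" by blast
  qed
qed
lemma finite_nbhd:
  assumes "finite J" "\<And>g. g \<in> J \<Longrightarrow> continuous_map N euclideanreal (h g)"
  shows "openin N {q \<in> topspace N. \<forall>g\<in>J. \<bar>h g q - a g\<bar> < \<epsilon>}"
  using assms
proof (induction J rule: finite_induct)
  case empty
  then show ?case by simp
next
  case (insert g J)
  have "continuous_map N euclideanreal (\<lambda>q. \<bar>h g q - a g\<bar>)"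
    using insert.prems by (intro continuous_map_real_abs continuous_map_diff) auto
  from openin_continuous_map_preimage[OF this, of "{..<\<epsilon>}"]
  have o1: "openin N {q \<in> topspace N. \<bar>h g q - a g\<bar> < \<epsilon>}" by simp
  have o2: "openin N {q \<in> topspace N. \<forall>g\<in>J. \<bar>h g q - a g\<bar> < \<epsilon>}"
    using insert by auto
  have "{q \<in> topspace N. \<forall>g'\<in>insert g J. \<bar>h g' q - a g'\<bar> < \<epsilon>}
     = {q \<in> topspace N. \<bar>h g q - a g\<bar> < \<epsilon>} \<inter> {q \<in> topspace N. \<forall>g\<in>J. \<bar>h g q - a g\<bar> < \<epsilon>}"
    by auto
  then show ?case using o1 o2 by (simp add: openin_Int)
qed

locale MT =
  fixes E :: "'a topology" and le :: "'a \<Rightarrow> 'a \<Rightarrow> bool" and B :: "'b topology" and \<beta> :: "'a \<Rightarrow> 'b"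
  assumes T2: "T2_preordered E le" and Ty: "Tychonoff_space E"
    and cro: "completely_regularly_ordered (quot_top E le) (quot_le le)"
    and sc: "stone_cech E B \<beta>"
begin

abbreviation "leB \<equiv> beta_le E le B \<beta>"
abbreviation "X \<equiv> quot_top E le"
abbreviation "proj \<equiv> quot_proj E le"
abbreviation "Y \<equiv> quot_top B leB"
abbreviation "Proj \<equiv> quot_proj B leB"
abbreviation "phi \<equiv> (\<lambda>c. Proj (\<beta> (SOME x. x \<in> c)))"

definition "Gs = {g. continuous_map B unit_interval g \<and> (\<exists>f\<in>cont_iso E le. \<forall>z\<in>topspace E. g (\<beta> z) = f z)}"
definition "hat g d = g (SOME x. x \<in> d)"

lemma po: "preorder_on (topspace E) le"
  using T2 by (simp add: T2_preordered_def)

lemma reflE: "x \<in> topspace E \<Longrightarrow> le x x" using po by (simp add: preorder_on_def)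
lemma transE: "x \<in> topspace E \<Longrightarrow> y \<in> topspace E \<Longrightarrow> z \<in> topspace E \<Longrightarrow> le x y \<Longrightarrow> le y z \<Longrightarrow> le x z"
  using po unfolding preorder_on_def by blast

lemma F_iso: "f \<in> cont_iso E le \<Longrightarrow> x \<in> topspace E \<Longrightarrow> y \<in> topspace E \<Longrightarrow> le x y \<Longrightarrow> f x \<le> f y"
  by (simp add: cont_iso_def isotone_def)

lemma leB_iff: "leB x y \<longleftrightarrow> (\<forall>g\<in>Gs. g x \<le> g y)"
  unfolding beta_le_def Gs_def by blast

lemma reflB: "leB x x" by (simp add: leB_iff)
lemma transB: "leB x y \<Longrightarrow> leB y z \<Longrightarrow> leB x z" by (meson leB_iff order_trans)

lemma poB: "preorder_on S leB"
  unfolding preorder_on_def using reflB transB by blast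

lemma sc_ext: "f \<in> cont_iso E le \<Longrightarrow> \<exists>g\<in>Gs. \<forall>z\<in>topspace E. g (\<beta> z) = f z"
  using sc unfolding stone_cech_def Gs_def cont_iso_def by blast

lemma beta_cont: "continuous_map E B \<beta>"
proof -
  have "homeomorphic_map E (subtopology B (\<beta> ` topspace E)) \<beta>"
    using sc unfolding stone_cech_def embedding_map_def by (rule conjunct1)
  then have "continuous_map E (subtopology B (\<beta> ` topspace E)) \<beta>"
    by (rule homeomorphic_imp_continuous_map)
  then show ?thesis by (simp add: continuous_map_in_subtopology)
qed

lemma beta_top: "x \<in> topspace E \<Longrightarrow> \<beta> x \<in> topspace B"
  using continuous_map_image_subset_topspace[OF beta_cont] by blast

lemma Gs_cont: "g \<in> Gs \<Longrightarrow> continuous_map B unit_interval g" by (simp add: Gs_def)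

lemma Gs_const: "g \<in> Gs \<Longrightarrow> leB x y \<Longrightarrow> leB y x \<Longrightarrow> g x = g y"
  using leB_iff by (meson order_antisym)

lemma topX: "topspace X = proj ` topspace E" by (rule topspace_quot_top)
lemma topY: "topspace Y = Proj ` topspace B" by (rule topspace_quot_top)

lemma hat_Proj: "g \<in> Gs \<Longrightarrow> x \<in> topspace B \<Longrightarrow> hat g (Proj x) = g x"
proof -
  assume g: "g \<in> Gs" and x: "x \<in> topspace B"
  have "(SOME z. z \<in> Proj x) \<in> Proj x" by (rule quot_some[OF poB x])
  then have "leB x (SOME z. z \<in> Proj x) \<and> leB (SOME z. z \<in> Proj x) x" by (rule quot_mem[THEN conjunct2])
  then have "g (SOME z. z \<in> Proj x) = g x" using Gs_const[OF g] by blast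
  then show ?thesis unfolding hat_def .
qed

lemma hat_cont: "g \<in> Gs \<Longrightarrow> continuous_map Y unit_interval (hat g)"
proof -
  assume g: "g \<in> Gs"
  have "continuous_map B unit_interval (\<lambda>x. hat g (Proj x))"
    by (rule continuous_map_eq[OF Gs_cont[OF g]]) (simp add: hat_Proj[OF g])
  then show ?thesis by (rule quot_cont_from)
qed

lemma hat_cont_real: "g \<in> Gs \<Longrightarrow> continuous_map Y euclideanreal (hat g)"
  using hat_cont continuous_map_in_subtopology by blast

lemma quotB_le: "x \<in> topspace B \<Longrightarrow> y \<in> topspace B \<Longrightarrow> quot_le leB (Proj x) (Proj y) \<longleftrightarrow> leB x y"
proof
  assume x: "x \<in> topspace B" and y: "y \<in> topspace B"
  assume "quot_le leB (Proj x) (Proj y)"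
  then obtain a b where ab: "a \<in> Proj x" "b \<in> Proj y" "leB a b" unfolding quot_le_def by blast
  have "leB x a" using quot_mem[OF ab(1)] by simp
  moreover have "leB b y" using quot_mem[OF ab(2)] by simp
  ultimately show "leB x y" using ab(3) transB by blast
next
  assume x: "x \<in> topspace B" and y: "y \<in> topspace B" and "leB x y"
  then show "quot_le leB (Proj x) (Proj y)"
    unfolding quot_le_def using quot_self[OF poB x] quot_self[OF poB y] by blast
qed

lemma quotE_le: "x \<in> topspace E \<Longrightarrow> y \<in> topspace E \<Longrightarrow> quot_le le (proj x) (proj y) \<longleftrightarrow> le x y"
proof
  assume x: "x \<in> topspace E" and y: "y \<in> topspace E"
  assume "quot_le le (proj x) (proj y)"
  then obtain a b where ab: "a \<in> proj x" "b \<in> proj y" "le a b" unfolding quot_le_def by blast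
  have a: "a \<in> topspace E" "le x a" using quot_mem[OF ab(1)] by simp_all
  have b: "b \<in> topspace E" "le b y" using quot_mem[OF ab(2)] by simp_all
  have "le x b" using transE[OF x a(1) b(1) a(2) ab(3)] .
  then show "le x y" using transE[OF x b(1) y _ b(2)] by simp
next
  assume x: "x \<in> topspace E" and y: "y \<in> topspace E" and "le x y"
  then show "quot_le le (proj x) (proj y)"
    unfolding quot_le_def using quot_self[OF po x] quot_self[OF po y] by blast
qed

lemma leY_iff: "d \<in> topspace Y \<Longrightarrow> e \<in> topspace Y \<Longrightarrow> quot_le leB d e \<longleftrightarrow> (\<forall>g\<in>Gs. hat g d \<le> hat g e)"
proof -
  assume "d \<in> topspace Y" "e \<in> topspace Y"
  then obtain x y where xy: "x \<in> topspace B" "y \<in> topspace B" "d = Proj x" "e = Proj y"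
    using topY by auto
  then show ?thesis using quotB_le leB_iff hat_Proj by simp
qed

lemma Y_eq: "d \<in> topspace Y \<Longrightarrow> e \<in> topspace Y \<Longrightarrow> (\<forall>g\<in>Gs. hat g d = hat g e) \<Longrightarrow> d = e"
proof -
  assume "d \<in> topspace Y" "e \<in> topspace Y" and H: "\<forall>g\<in>Gs. hat g d = hat g e"
  then obtain x y where xy: "x \<in> topspace B" "y \<in> topspace B" "d = Proj x" "e = Proj y"
    using topY by auto
  then have "\<forall>g\<in>Gs. g x = g y" using H hat_Proj by simp
  then have "leB x y" "leB y x" using leB_iff by auto
  then show ?thesis using quot_eq[OF poB xy(1,2)] xy by simp
qed

lemma lift: "f \<in> cont_iso X (quot_le le) \<Longrightarrow> (\<lambda>x. f (proj x)) \<in> cont_iso E le"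
  unfolding cont_iso_def isotone_def
proof (intro CollectI conjI ballI impI)
  assume f: "f \<in> {f. continuous_map X unit_interval f \<and>
                 (\<forall>x\<in>topspace X. \<forall>y\<in>topspace X. quot_le le x y \<longrightarrow> f x \<le> f y)}"
  show "continuous_map E unit_interval (\<lambda>x. f (proj x))"
    using continuous_map_compose[OF quot_proj_cont, of E le unit_interval f] f by (simp add: o_def)
  fix x y assume "x \<in> topspace E" "y \<in> topspace E" "le x y"
  then show "f (proj x) \<le> f (proj y)" using f quotE_le topX by auto
qed

lemma first: "x \<in> topspace E \<Longrightarrow> y \<in> topspace E \<Longrightarrow> le x y \<longleftrightarrow> (\<forall>f\<in>cont_iso E le. f x \<le> f y)"
proof
  assume "x \<in> topspace E" "y \<in> topspace E" "le x y"
  then show "\<forall>f\<in>cont_iso E le. f x \<le> f y" using F_iso by blast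
next
  assume x: "x \<in> topspace E" and y: "y \<in> topspace E" and H: "\<forall>f\<in>cont_iso E le. f x \<le> f y"
  have px: "proj x \<in> topspace X" and py: "proj y \<in> topspace X" using x y topX by auto
  have "\<forall>f\<in>cont_iso X (quot_le le). f (proj x) \<le> f (proj y)"
    using H lift by fastforce
  then have "quot_le le (proj x) (proj y)"
    using cro px py unfolding completely_regularly_ordered_def by blast
  then show "le x y" using quotE_le x y by blast
qed

lemma le_leB: "x \<in> topspace E \<Longrightarrow> y \<in> topspace E \<Longrightarrow> le x y \<Longrightarrow> leB (\<beta> x) (\<beta> y)"
  unfolding leB_iff Gs_def using F_iso by fastforce

lemma leB_le: "x \<in> topspace E \<Longrightarrow> y \<in> topspace E \<Longrightarrow> leB (\<beta> x) (\<beta> y) \<Longrightarrow> le x y"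
proof -
  assume x: "x \<in> topspace E" and y: "y \<in> topspace E" and H: "leB (\<beta> x) (\<beta> y)"
  have "\<forall>f\<in>cont_iso E le. f x \<le> f y"
  proof
    fix f assume f: "f \<in> cont_iso E le"
    then obtain g where "g \<in> Gs" "\<forall>z\<in>topspace E. g (\<beta> z) = f z" using sc_ext by blast
    then show "f x \<le> f y" using H x y leB_iff by metis
  qed
  then show ?thesis using first x y by blast
qed

lemma phi_proj: "x \<in> topspace E \<Longrightarrow> phi (proj x) = Proj (\<beta> x)"
proof -
  assume x: "x \<in> topspace E"
  define z where "z = (SOME z. z \<in> proj x)"
  have zp: "z \<in> proj x" unfolding z_def by (rule quot_some[OF po x])
  have z: "z \<in> topspace E" "le x z" "le z x" using quot_mem[OF zp] by simp_all
  have "leB (\<beta> z) (\<beta> x)" "leB (\<beta> x) (\<beta> z)" using le_leB z x by auto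
  then have "Proj (\<beta> z) = Proj (\<beta> x)" using quot_eq[OF poB beta_top[OF z(1)] beta_top[OF x]] by simp
  then show ?thesis unfolding z_def by simp
qed

lemma hat_phi: "g \<in> Gs \<Longrightarrow> x \<in> topspace E \<Longrightarrow> hat g (phi (proj x)) = g (\<beta> x)"
  using phi_proj hat_Proj beta_top by simp

lemma phi_top: "c \<in> topspace X \<Longrightarrow> phi c \<in> topspace Y"
  using topX topY phi_proj beta_top by auto

lemma phi_cont: "continuous_map X Y phi"
proof (rule quot_cont_from)
  have "continuous_map E Y (Proj \<circ> \<beta>)"
    by (rule continuous_map_compose[OF beta_cont quot_proj_cont])
  then show "continuous_map E Y (\<lambda>x. phi (proj x))"
    by (rule continuous_map_eq) (simp add: phi_proj)
qed

end
context MT begin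

lemma phi_iso: "isotone X (quot_le le) (quot_le leB) phi"
  unfolding isotone_def
proof (intro ballI impI)
  fix c c' assume c: "c \<in> topspace X" and c': "c' \<in> topspace X" and cc: "quot_le le c c'"
  obtain x where x: "x \<in> topspace E" "c = proj x" using c topX by auto
  obtain y where y: "y \<in> topspace E" "c' = proj y" using c' topX by auto
  have "le x y" using cc x y quotE_le by simp
  then have "leB (\<beta> x) (\<beta> y)" using le_leB x y by simp
  then show "quot_le leB (phi c) (phi c')"
    using x y phi_proj quotB_le beta_top by simp
qed

lemma phi_refl: "c \<in> topspace X \<Longrightarrow> c' \<in> topspace X \<Longrightarrow> quot_le leB (phi c) (phi c') \<Longrightarrow> quot_le le c c'"
proof -
  assume c: "c \<in> topspace X" and c': "c' \<in> topspace X" and cc: "quot_le leB (phi c) (phi c')"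
  obtain x where x: "x \<in> topspace E" "c = proj x" using c topX by auto
  obtain y where y: "y \<in> topspace E" "c' = proj y" using c' topX by auto
  have "leB (\<beta> x) (\<beta> y)" using cc x y phi_proj quotB_le beta_top by simp
  then have "le x y" using leB_le x y by simp
  then show ?thesis using x y quotE_le by simp
qed

lemma phi_inj: "inj_on phi (topspace X)"
  unfolding inj_on_def
proof (intro ballI impI)
  fix c c' assume c: "c \<in> topspace X" and c': "c' \<in> topspace X" and cc: "phi c = phi c'"
  obtain x where x: "x \<in> topspace E" "c = proj x" using c topX by auto
  obtain y where y: "y \<in> topspace E" "c' = proj y" using c' topX by auto
  have "Proj (\<beta> x) = Proj (\<beta> y)" using cc x y phi_proj by simp
  then have "leB (\<beta> x) (\<beta> y)" "leB (\<beta> y) (\<beta> x)"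
    using quot_eq[OF poB beta_top[OF x(1)] beta_top[OF y(1)]] by simp_all
  then have "le x y" "le y x" using leB_le x y by simp_all
  then show "c = c'" using quot_eq[OF po x(1) y(1)] x y by simp
qed

lemma XG: "X = topology_generated_by
           {{x \<in> topspace X. f x \<in> U} | f U. f \<in> cont_iso X (quot_le le) \<and> openin unit_interval U}"
  using cro unfolding completely_regularly_ordered_def by (rule conjunct2[THEN conjunct1])

lemma gen_pre:
  assumes "generate_topology_on
           {{x \<in> topspace X. f x \<in> U} | f U. f \<in> cont_iso X (quot_le le) \<and> openin unit_interval U} W"
  shows "\<exists>V. openin Y V \<and> W \<inter> topspace X = {c \<in> topspace X. phi c \<in> V}"
  using assms
proof (induction rule: generate_topology_on.induct)
  case Empty
  then show ?case by (intro exI[of _ "{}"]) auto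
next
  case (Int a b)
  then obtain Va Vb where "openin Y Va" "a \<inter> topspace X = {c \<in> topspace X. phi c \<in> Va}"
    "openin Y Vb" "b \<inter> topspace X = {c \<in> topspace X. phi c \<in> Vb}" by blast
  then show ?case by (intro exI[of _ "Va \<inter> Vb"]) auto
next
  case (UN K)
  define Vf where "Vf = (\<lambda>k. SOME V. openin Y V \<and> k \<inter> topspace X = {c \<in> topspace X. phi c \<in> V})"
  have Vf: "openin Y (Vf k) \<and> k \<inter> topspace X = {c \<in> topspace X. phi c \<in> Vf k}" if "k \<in> K" for k
    unfolding Vf_def using UN.IH[OF that] by (rule someI_ex)
  show ?case
  proof (intro exI conjI)
    show "openin Y (\<Union>(Vf ` K))" using Vf by (intro openin_Union) blast
    show "\<Union>K \<inter> topspace X = {c \<in> topspace X. phi c \<in> \<Union>(Vf ` K)}"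
    proof (rule set_eqI)
      fix c
      show "c \<in> \<Union>K \<inter> topspace X \<longleftrightarrow> c \<in> {c \<in> topspace X. phi c \<in> \<Union>(Vf ` K)}"
      proof
        assume "c \<in> \<Union>K \<inter> topspace X"
        then obtain k where "k \<in> K" "c \<in> k" "c \<in> topspace X" by blast
        then show "c \<in> {c \<in> topspace X. phi c \<in> \<Union>(Vf ` K)}" using Vf[of k] by blast
      next
        assume "c \<in> {c \<in> topspace X. phi c \<in> \<Union>(Vf ` K)}"
        then obtain k where "k \<in> K" "phi c \<in> Vf k" "c \<in> topspace X" by blast
        then show "c \<in> \<Union>K \<inter> topspace X" using Vf[of k] by blast
      qed
    qed
  qed
next
  case (Basis s)
  then obtain f U where fU: "s = {x \<in> topspace X. f x \<in> U}" "f \<in> cont_iso X (quot_le le)" "openin unit_interval U"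
    by blast
  have fE: "(\<lambda>x. f (proj x)) \<in> cont_iso E le" using lift[OF fU(2)] .
  obtain g where g: "g \<in> Gs" "\<forall>z\<in>topspace E. g (\<beta> z) = f (proj z)" using sc_ext[OF fE] by blast
  define V where "V = {d \<in> topspace Y. hat g d \<in> U}"
  have oV: "openin Y V" unfolding V_def
    using openin_continuous_map_preimage[OF hat_cont[OF g(1)] fU(3)] .
  have "s \<inter> topspace X = {c \<in> topspace X. phi c \<in> V}"
  proof (rule set_eqI)
    fix c
    show "c \<in> s \<inter> topspace X \<longleftrightarrow> c \<in> {c \<in> topspace X. phi c \<in> V}"
    proof (cases "c \<in> topspace X")
      case True
      then obtain x where x: "x \<in> topspace E" "c = proj x" using topX by auto
      have "hat g (phi c) = f c" using hat_phi[OF g(1) x(1)] g(2) x by simp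
      then show ?thesis using fU(1) True phi_top[OF True] unfolding V_def by simp
    next
      case False
      then show ?thesis by simp
    qed
  qed
  then show ?case using oV by blast
qed

lemma phi_emb: "embedding_map X Y phi"
proof (rule emb_by_preimages[OF phi_cont phi_inj])
  fix W assume W: "openin X W"
  have "openin (topology_generated_by
           {{x \<in> topspace X. f x \<in> U} | f U. f \<in> cont_iso X (quot_le le) \<and> openin unit_interval U}) W"
    using W XG by simp
  then have "generate_topology_on
           {{x \<in> topspace X. f x \<in> U} | f U. f \<in> cont_iso X (quot_le le) \<and> openin unit_interval U} W"
    by (rule openin_topology_generated_by)
  from gen_pre[OF this] obtain V where "openin Y V" "W \<inter> topspace X = {c \<in> topspace X. phi c \<in> V}"
    by blast
  moreover have "W \<inter> topspace X = W" using openin_subset[OF W] by blast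
  ultimately show "\<exists>V. openin Y V \<and> W = {x \<in> topspace X. phi x \<in> V}" by auto
qed

lemma Y_compact: "compact_space Y"
proof -
  have "compactin B (topspace B)" using sc unfolding stone_cech_def compact_space_def by blast
  then have "compactin Y (Proj ` topspace B)" using image_compactin quot_proj_cont by blast
  then show ?thesis unfolding compact_space_def using topY by simp
qed

lemma Y_Hausdorff: "Hausdorff_space Y"
proof (rule family_Hausdorff[of Gs Y hat])
  show "\<And>i. i \<in> Gs \<Longrightarrow> continuous_map Y euclideanreal (hat i)" by (rule hat_cont_real)
  show "\<exists>i\<in>Gs. hat i d \<noteq> hat i e" if "d \<in> topspace Y" "e \<in> topspace Y" "d \<noteq> e" for d e
    using Y_eq that by blast
qed

lemma Y_dense: "Y closure_of (phi ` topspace X) = topspace Y"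
proof -
  have im: "phi ` topspace X = Proj ` (\<beta> ` topspace E)"
    using topX phi_proj by (auto simp: image_iff)
  have "Proj ` (B closure_of (\<beta> ` topspace E)) \<subseteq> Y closure_of (Proj ` (\<beta> ` topspace E))"
    by (rule continuous_map_image_closure_subset[OF quot_proj_cont])
  moreover have "B closure_of (\<beta> ` topspace E) = topspace B"
    using sc unfolding stone_cech_def by blast
  ultimately have "topspace Y \<subseteq> Y closure_of (phi ` topspace X)" using topY im by simp
  then show ?thesis by (rule subset_antisym[OF closure_of_subset_topspace])
qed

lemma Y_T2: "T2_ordered Y (quot_le leB)"
  unfolding T2_ordered_def T2_preordered_def partial_order_on_def preorder_on_def
proof (intro conjI ballI impI)
  show "closedin (prod_topology Y Y) (graph_rel Y (quot_le leB))"
    by (rule family_closed_graph[of Gs Y hat]) (simp_all add: hat_cont_real leY_iff)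
  fix d assume d: "d \<in> topspace Y"
  show "quot_le leB d d" using leY_iff[OF d d] by simp
  show "quot_le leB d d" using leY_iff[OF d d] by simp
next
  fix d e f assume d: "d \<in> topspace Y" and e: "e \<in> topspace Y" and f: "f \<in> topspace Y"
    and de: "quot_le leB d e" and ef: "quot_le leB e f"
  show "quot_le leB d f" using de ef leY_iff[OF d e] leY_iff[OF e f] leY_iff[OF d f]
    by (meson order_trans)
  show "quot_le leB d f" using de ef leY_iff[OF d e] leY_iff[OF e f] leY_iff[OF d f]
    by (meson order_trans)
next
  fix d e assume d: "d \<in> topspace Y" and e: "e \<in> topspace Y"
    and de: "quot_le leB d e" and ed: "quot_le leB e d"
  have "\<forall>g\<in>Gs. hat g d = hat g e" using de ed leY_iff[OF d e] leY_iff[OF e d]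
    by (meson order_antisym)
  then show "d = e" using Y_eq d e by blast
qed

lemma oc: "order_compactification X (quot_le le) Y (quot_le leB) phi"
  unfolding order_compactification_def preorder_embedding_def
  using phi_cont phi_iso phi_inj phi_emb phi_refl Y_dense Y_compact Y_Hausdorff Y_T2
  by blast

end
context MT begin

lemma nach_equiv:
  fixes N :: "'c topology" and leN n
  assumes nc: "nachbin_compactification X (quot_le le) N leN n"
  shows "compact_equiv X Y (quot_le leB) phi N leN n"
proof -
  have ocN: "order_compactification X (quot_le le) N leN n"
    and ext: "\<forall>f\<in>cont_iso X (quot_le le). \<exists>h\<in>cont_iso N leN. \<forall>c\<in>topspace X. h (n c) = f c"
    using nc unfolding nachbin_compactification_def by auto
  have n_cont: "continuous_map X N n" and n_iso: "isotone X (quot_le le) leN n"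
    and Nd: "N closure_of (n ` topspace X) = topspace N" and cN: "compact_space N"
    and hN: "Hausdorff_space N" and T2N: "T2_ordered N leN"
    using ocN unfolding order_compactification_def preorder_embedding_def by auto
  have T2pN: "T2_preordered N leN" using T2N unfolding T2_ordered_def by simp
  have antisymN: "\<And>p q. p \<in> topspace N \<Longrightarrow> q \<in> topspace N \<Longrightarrow> leN p q \<Longrightarrow> leN q p \<Longrightarrow> p = q"
    using T2N unfolding T2_ordered_def partial_order_on_def by blast
  have n_top: "\<And>c. c \<in> topspace X \<Longrightarrow> n c \<in> topspace N"
    using continuous_map_image_subset_topspace[OF n_cont] by blast
  have kg: "(\<lambda>c. hat g (phi c)) \<in> cont_iso X (quot_le le)" if g: "g \<in> Gs" for g
    unfolding cont_iso_def isotone_def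
  proof (intro CollectI conjI ballI impI)
    show "continuous_map X unit_interval (\<lambda>c. hat g (phi c))"
      using continuous_map_compose[OF phi_cont hat_cont[OF g]] by (simp add: o_def)
    fix c c' assume c: "c \<in> topspace X" and c': "c' \<in> topspace X" and cc: "quot_le le c c'"
    have "quot_le leB (phi c) (phi c')" using phi_iso c c' cc unfolding isotone_def by blast
    then show "hat g (phi c) \<le> hat g (phi c')"
      using leY_iff[OF phi_top[OF c] phi_top[OF c']] g by blast
  qed
  define H where "H g = (SOME h. h \<in> cont_iso N leN \<and> (\<forall>c\<in>topspace X. h (n c) = hat g (phi c)))" for g
  have H: "H g \<in> cont_iso N leN \<and> (\<forall>c\<in>topspace X. H g (n c) = hat g (phi c))" if g: "g \<in> Gs" for g
  proof -
    obtain h where "h \<in> cont_iso N leN" "\<forall>c\<in>topspace X. h (n c) = hat g (phi c)"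
      using bspec[OF ext kg[OF g]] by auto
    then show ?thesis unfolding H_def by (rule someI[of _ h, OF conjI])
  qed
  have Hc: "continuous_map N euclideanreal (H g)" if "g \<in> Gs" for g
    using H[OF that] unfolding cont_iso_def by (simp add: continuous_map_in_subtopology)
  have Hiso: "H g p \<le> H g q" if "g \<in> Gs" "p \<in> topspace N" "q \<in> topspace N" "leN p q" for g p q
    using H[OF that(1)] that unfolding cont_iso_def isotone_def by blast
  have Hn: "H g (n c) = hat g (phi c)" if "g \<in> Gs" "c \<in> topspace X" for g c
    using H[OF that(1)] that(2) by blast
  have cY: "compactin Y (topspace Y)" using Y_compact unfolding compact_space_def .
  have nbhd: "\<exists>c\<in>topspace X. n c \<in> W" if "openin N W" "p \<in> W" for W p
  proof -
    have "p \<in> topspace N" using openin_subset[OF that(1)] that(2) by blast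
    then have "p \<in> N closure_of (n ` topspace X)" using Nd by simp
    then have "\<forall>T. p \<in> T \<and> openin N T \<longrightarrow> (\<exists>y. y \<in> n ` topspace X \<and> y \<in> T)"
      unfolding in_closure_of by (rule conjunct2)
    then have "\<exists>y. y \<in> n ` topspace X \<and> y \<in> W" using that by blast
    then show ?thesis by blast
  qed
  have ex: "\<exists>d. d \<in> topspace Y \<and> (\<forall>g\<in>Gs. hat g d = H g p)" if p: "p \<in> topspace N" for p
  proof (rule ccontr)
    assume "\<not> (\<exists>d. d \<in> topspace Y \<and> (\<forall>g\<in>Gs. hat g d = H g p))"
    then have sepd: "\<exists>g\<in>Gs. hat g d \<noteq> H g p" if "d \<in> topspace Y" for d using that by blast
    obtain J \<epsilon> where J: "finite J" "J \<subseteq> Gs" "\<epsilon> > 0" "\<forall>e\<in>topspace Y. \<exists>g\<in>J. \<epsilon> \<le> \<bar>hat g e - H g p\<bar>"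
      using finite_sep[OF cY hat_cont_real sepd] by blast
    define W where "W = {q \<in> topspace N. \<forall>g\<in>J. \<bar>H g q - H g p\<bar> < \<epsilon>}"
    have oW: "openin N W" unfolding W_def
      by (rule finite_nbhd) (use J Hc in auto)
    have "p \<in> W" using p J(3) unfolding W_def by simp
    then obtain c where c: "c \<in> topspace X" "n c \<in> W" using nbhd oW by blast
    obtain g where g: "g \<in> J" "\<epsilon> \<le> \<bar>hat g (phi c) - H g p\<bar>" using J(4) phi_top[OF c(1)] by blast
    have "hat g (phi c) = H g (n c)" using Hn g(1) J(2) c(1) by auto
    moreover have "\<bar>H g (n c) - H g p\<bar> < \<epsilon>" using c(2) g(1) unfolding W_def by blast
    ultimately show False using g(2) by linarith
  qed
  define C where "C p = (SOME d. d \<in> topspace Y \<and> (\<forall>g\<in>Gs. hat g d = H g p))" for p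
  have C: "C p \<in> topspace Y \<and> (\<forall>g\<in>Gs. hat g (C p) = H g p)" if "p \<in> topspace N" for p
    unfolding C_def using ex[OF that] by (rule someI_ex)
  have C_cont: "continuous_map N Y C"
    unfolding continuous_map_def
  proof (intro conjI allI impI)
    show "C \<in> topspace N \<rightarrow> topspace Y" using C by blast
    fix V assume V: "openin Y V"
    show "openin N {p \<in> topspace N. C p \<in> V}"
    proof (subst openin_subopen, intro ballI)
      fix p assume pV: "p \<in> {p \<in> topspace N. C p \<in> V}"
      then have p: "p \<in> topspace N" and CpV: "C p \<in> V" by auto
      have cK: "compactin Y (topspace Y - V)"
        by (rule closedin_compact_space[OF Y_compact]) (use V in blast)
      have sepK: "\<exists>g\<in>Gs. hat g e \<noteq> H g p" if e: "e \<in> topspace Y - V" for e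
      proof (rule ccontr)
        assume "\<not> (\<exists>g\<in>Gs. hat g e \<noteq> H g p)"
        then have "\<forall>g\<in>Gs. hat g e = hat g (C p)" using C[OF p] by auto
        then have "e = C p" using Y_eq e C[OF p] by blast
        then show False using e CpV by blast
      qed
      obtain J \<epsilon> where J: "finite J" "J \<subseteq> Gs" "\<epsilon> > 0" "\<forall>e\<in>topspace Y - V. \<exists>g\<in>J. \<epsilon> \<le> \<bar>hat g e - H g p\<bar>"
        using finite_sep[OF cK hat_cont_real sepK] by blast
      define W where "W = {q \<in> topspace N. \<forall>g\<in>J. \<bar>H g q - H g p\<bar> < \<epsilon>}"
      have oW: "openin N W" unfolding W_def
        by (rule finite_nbhd) (use J Hc in auto)
      have pW: "p \<in> W" using p J(3) unfolding W_def by simp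
      have "W \<subseteq> {p \<in> topspace N. C p \<in> V}"
      proof
        fix q assume qW: "q \<in> W"
        then have q: "q \<in> topspace N" unfolding W_def by blast
        show "q \<in> {p \<in> topspace N. C p \<in> V}"
        proof (rule ccontr)
          assume "q \<notin> {p \<in> topspace N. C p \<in> V}"
          then have "C q \<in> topspace Y - V" using C[OF q] q by blast
          then obtain g where g: "g \<in> J" "\<epsilon> \<le> \<bar>hat g (C q) - H g p\<bar>" using J(4) by blast
          have "hat g (C q) = H g q" using C[OF q] g(1) J(2) by blast
          moreover have "\<bar>H g q - H g p\<bar> < \<epsilon>" using qW g(1) unfolding W_def by blast
          ultimately show False using g(2) by linarith
        qed
      qed
      then show "\<exists>T. openin N T \<and> p \<in> T \<and> T \<subseteq> {p \<in> topspace N. C p \<in> V}"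
        using oW pW by blast
    qed
  qed
  have C_iso: "isotone N leN (quot_le leB) C"
    unfolding isotone_def
  proof (intro ballI impI)
    fix p q assume p: "p \<in> topspace N" and q: "q \<in> topspace N" and pq: "leN p q"
    have "\<forall>g\<in>Gs. hat g (C p) \<le> hat g (C q)" using C[OF p] C[OF q] Hiso p q pq by simp
    then show "quot_le leB (C p) (C q)" using leY_iff C[OF p] C[OF q] by blast
  qed
  have Cn: "C (n c) = phi c" if c: "c \<in> topspace X" for c
  proof (rule Y_eq)
    show "C (n c) \<in> topspace Y" using C[OF n_top[OF c]] by blast
    show "phi c \<in> topspace Y" using phi_top[OF c] .
    show "\<forall>g\<in>Gs. hat g (C (n c)) = hat g (phi c)" using C[OF n_top[OF c]] Hn c by simp
  qed
  have reflN: "leN p q" if p: "p \<in> topspace N" and q: "q \<in> topspace N" and H1: "\<forall>g\<in>Gs. H g p \<le> H g q" for p q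
  proof (rule ccontr)
    assume npq: "\<not> leN p q"
    obtain h where h: "h \<in> cont_iso N leN" "h q = 0" "h p = 1"
      using nachbin_sep[OF cN hN T2pN p q npq] by blast
    have f': "(\<lambda>c. h (n c)) \<in> cont_iso X (quot_le le)"
      unfolding cont_iso_def isotone_def
    proof (intro CollectI conjI ballI impI)
      show "continuous_map X unit_interval (\<lambda>c. h (n c))"
        using continuous_map_compose[OF n_cont, of unit_interval h] h(1) by (simp add: cont_iso_def o_def)
      fix c c' assume c: "c \<in> topspace X" and c': "c' \<in> topspace X" and cc: "quot_le le c c'"
      have "leN (n c) (n c')" using n_iso c c' cc unfolding isotone_def by blast
      then show "h (n c) \<le> h (n c')" using h(1) n_top c c' unfolding cont_iso_def isotone_def by blast
    qed
    obtain g where g: "g \<in> Gs" "\<forall>z\<in>topspace E. g (\<beta> z) = h (n (proj z))"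
      using sc_ext[OF lift[OF f']] by blast
    have hc: "continuous_map N euclideanreal h"
      using h(1) unfolding cont_iso_def by (simp add: continuous_map_in_subtopology)
    have eq: "H g r = h r" if r: "r \<in> topspace N" for r
    proof (rule forall_in_closure_of_eq[OF _ _ Hc[OF g(1)] hc])
      show "r \<in> N closure_of (n ` topspace X)" using Nd r by simp
      show "Hausdorff_space euclideanreal" by simp
      fix y assume "y \<in> n ` topspace X"
      then obtain x where x: "x \<in> topspace E" "y = n (proj x)" using topX by auto
      have px: "proj x \<in> topspace X" using x(1) topX by auto
      show "H g y = h y" using Hn[OF g(1) px] hat_phi[OF g(1) x(1)] g(2) x by simp
    qed
    have "H g p \<le> H g q" using H1 g(1) by blast
    then show False using eq[OF p] eq[OF q] h by simp
  qed
  have C_inj: "inj_on C (topspace N)"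
    unfolding inj_on_def
  proof (intro ballI impI)
    fix p q assume p: "p \<in> topspace N" and q: "q \<in> topspace N" and pq: "C p = C q"
    have "\<forall>g\<in>Gs. H g p = H g q" using C[OF p] C[OF q] pq by simp
    then have "leN p q" "leN q p" using reflN p q by simp_all
    then show "p = q" using antisymN p q by blast
  qed
  have C_surj: "C ` topspace N = topspace Y"
  proof
    show "C ` topspace N \<subseteq> topspace Y" using C by blast
    have "compactin Y (C ` topspace N)"
      using image_compactin[OF _ C_cont] cN unfolding compact_space_def by blast
    then have cl: "closedin Y (C ` topspace N)" using compactin_imp_closedin Y_Hausdorff by blast
    have "phi ` topspace X \<subseteq> C ` topspace N"
    proof
      fix y assume "y \<in> phi ` topspace X"
      then obtain c where c: "c \<in> topspace X" "y = phi c" by blast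
      then have "y = C (n c)" using Cn by simp
      then show "y \<in> C ` topspace N" using n_top[OF c(1)] by (rule image_eqI)
    qed
    then have "Y closure_of (phi ` topspace X) \<subseteq> C ` topspace N"
      by (rule closure_of_minimal[OF _ cl])
    then show "topspace Y \<subseteq> C ` topspace N" using Y_dense by simp
  qed
  define D where "D = inv_into (topspace N) C"
  have DC: "D (C p) = p" if "p \<in> topspace N" for p
    unfolding D_def using C_inj that by simp
  have CD: "D d \<in> topspace N \<and> C (D d) = d" if "d \<in> topspace Y" for d
    unfolding D_def using that C_surj by (metis inv_into_into f_inv_into_f)
  have D_cont: "continuous_map Y N D"
    using continuous_inverse_map[OF cN Y_Hausdorff C_cont DC, of "topspace Y"] C_surj by simp
  have D_iso: "isotone Y (quot_le leB) leN D"
    unfolding isotone_def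
  proof (intro ballI impI)
    fix d e assume d: "d \<in> topspace Y" and e: "e \<in> topspace Y" and de: "quot_le leB d e"
    have "\<forall>g\<in>Gs. hat g d \<le> hat g e" using leY_iff[OF d e] de by blast
    then have "\<forall>g\<in>Gs. H g (D d) \<le> H g (D e)" using CD[OF d] CD[OF e] C by metis
    then show "leN (D d) (D e)" using reflN CD[OF d] CD[OF e] by blast
  qed
  have Dphi: "D (phi c) = n c" if "c \<in> topspace X" for c
    using Cn[OF that] DC[OF n_top[OF that]] by simp
  show ?thesis
    unfolding compact_equiv_def compact_le_def
    using C_cont C_iso Cn D_cont D_iso Dphi by blast
qed

end
theorem mainTheorem9:
  fixes E :: "'a topology" and le :: "'a \<Rightarrow> 'a \<Rightarrow> bool"
    and B :: "'b topology" and \<beta> :: "'a \<Rightarrow> 'b"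
  assumes "T2_preordered E le" and "Tychonoff_space E"
    and "completely_regularly_ordered (quot_top E le) (quot_le le)"
    and "stone_cech E B \<beta>"
  shows "(\<forall>x\<in>topspace E. \<forall>y\<in>topspace E. le x y \<longleftrightarrow> (\<forall>f\<in>cont_iso E le. f x \<le> f y))
    \<and> (let leB = beta_le E le B \<beta>;
           Proj = quot_proj B leB;
           proj = quot_proj E le;
           phi = (\<lambda>c. Proj (\<beta> (SOME x. x \<in> c)))
       in (\<forall>x\<in>topspace E. \<forall>y\<in>topspace E. proj x = proj y \<longrightarrow> Proj (\<beta> x) = Proj (\<beta> y))
        \<and> order_compactification (quot_top E le) (quot_le le) (quot_top B leB) (quot_le leB) phi
        \<and> (\<forall>(N :: 'c topology) leN n.
              nachbin_compactification (quot_top E le) (quot_le le) N leN n \<longrightarrow>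
              compact_equiv (quot_top E le) (quot_top B leB) (quot_le leB) phi N leN n)
        \<and> (\<forall>x\<in>topspace E. phi (proj x) = Proj (\<beta> x)))"
proof -
  interpret MT E le B \<beta> using assms by (rule MT.intro)
  have c1: "\<forall>x\<in>topspace E. \<forall>y\<in>topspace E. le x y \<longleftrightarrow> (\<forall>f\<in>cont_iso E le. f x \<le> f y)"
    using first by blast
  have c2: "\<forall>x\<in>topspace E. \<forall>y\<in>topspace E. proj x = proj y \<longrightarrow> Proj (\<beta> x) = Proj (\<beta> y)"
  proof (intro ballI impI)
    fix x y assume x: "x \<in> topspace E" and y: "y \<in> topspace E" and xy: "proj x = proj y"
    have "Proj (\<beta> x) = phi (proj x)" using phi_proj[OF x] by simp
    also have "\<dots> = phi (proj y)" using xy by simp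
    also have "\<dots> = Proj (\<beta> y)" using phi_proj[OF y] by simp
    finally show "Proj (\<beta> x) = Proj (\<beta> y)" .
  qed
  have c4: "\<forall>(N :: 'c topology) leN n.
              nachbin_compactification X (quot_le le) N leN n \<longrightarrow>
              compact_equiv X Y (quot_le leB) phi N leN n"
    using nach_equiv by blast
  have c5: "\<forall>x\<in>topspace E. phi (proj x) = Proj (\<beta> x)" using phi_proj by blast
  show ?thesis unfolding Let_def using c1 c2 oc c4 c5 by blast
qed
end
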